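(* For every positive integer $R$, $$\frac{1}{\#\{\mathbf{x}\in\mathbb{Z}^2:\|\mathbf{x}\|_E\le R\}}\sum_{\substack{\mathbf{x}\in\mathbb{Z}^2\\ \|\mathbf{x}\|_E\le R}}\operatorname{length}(o(\mathbf{x}))=\frac{8}{3\pi}\big(\sqrt2+2\sqrt5\big)R+O(1).$$ The implied constant is absolute.
   Context: Define $\mathcal K_1,\mathcal K_2:\mathbb{Z}^2\to\mathbb{Z}^2$ by $\mathcal K_1(x_1,x_2)=(-x_1+x_2,x_2)$ and $\mathcal K_2(x_1,x_2)=(x_1,x_1-x_2)$. The orbit $o(\mathbf{x})$ of $\mathbf{x}=(x_1,x_2)$ under repeated application of $\mathcal K_1,\mathcal K_2$ is traversed as the closed path $P_1\to P_2\to\cdots\to P_6\to P_1$, where $P_1=(x_1,x_2)$, $P_2=(-x_1+x_2,x_2)$, $P_3=(-x_1+x_2,-x_1)$, $P_4=(-x_2,-x_1)$, $P_5=(-x_2,x_1-x_2)$, $P_6=(x_1,x_1-x_2)$. Consecutive points differ by an application of $\mathcal K_1$ or $\mathcal K_2$. The length (perimeter) of the orbit is the total Euclidean length of this closed path: $$\operatorname{length}(o(\mathbf{x}))=2\big(|2x_1-x_2|+|x_1+x_2|+|2x_2-x_1|\big).$$ This quantity depends only on the orbit. $\|\cdot\|_E$ is the Euclidean norm. *)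

theory Defs
  imports "HOL-Analysis.Analysis"
begin

definition K1 :: "int \<times> int \<Rightarrow> int \<times> int" where
  "K1 = (\<lambda>(x1, x2). (- x1 + x2, x2))"

definition K2 :: "int \<times> int \<Rightarrow> int \<times> int" where
  "K2 = (\<lambda>(x1, x2). (x1, x1 - x2))"

definition enorm :: "int \<times> int \<Rightarrow> real" where
  "enorm = (\<lambda>(x1, x2). sqrt (real_of_int x1 ^ 2 + real_of_int x2 ^ 2))"

definition edist :: "int \<times> int \<Rightarrow> int \<times> int \<Rightarrow> real" where
  "edist p q = enorm (fst p - fst q, snd p - snd q)"

definition orbit_path :: "int \<times> int \<Rightarrow> (int \<times> int) list" where
  "orbit_path x = [x, K1 x, K2 (K1 x), K1 (K2 (K1 x)), K2 (K1 (K2 (K1 x))),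
                   K1 (K2 (K1 (K2 (K1 x))))]"

definition orbit_length :: "int \<times> int \<Rightarrow> real" where
  "orbit_length x = (let P = orbit_path x in
     (\<Sum>i<6. edist (P ! i) (P ! ((i + 1) mod 6))))"

definition disc_points :: "real \<Rightarrow> (int \<times> int) set" where
  "disc_points R = {x. enorm x \<le> R}"

end

theory Submission
  imports Defs
begin

lemma my_sqrt_le_iff: "x \<ge> 0 \<Longrightarrow> y \<ge> 0 \<Longrightarrow> sqrt x \<le> y \<longleftrightarrow> x \<le> y ^ 2"
  using real_le_lsqrt sqrt_le_D by blast

lemma mem_disc: "x \<in> disc_points (real R) \<longleftrightarrow> (fst x)^2 + (snd x)^2 \<le> (int R)^2"
proof -
  obtain a b where x: "x = (a,b)" by (cases x)
  have "x \<in> disc_points (real R) \<longleftrightarrow> sqrt (real_of_int a ^ 2 + real_of_int b ^ 2) \<le> real R"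
    by (simp add: disc_points_def enorm_def x)
  also have "\<dots> \<longleftrightarrow> real_of_int a ^ 2 + real_of_int b ^ 2 \<le> (real R)^2"
    by (simp add: my_sqrt_le_iff )
  also have "\<dots> \<longleftrightarrow> a^2 + b^2 \<le> (int R)^2"
  proof -
    have "real_of_int (a^2+b^2) \<le> real_of_int ((int R)^2) \<longleftrightarrow> a^2+b^2 \<le> (int R)^2"
      by (rule of_int_le_iff)
    then show ?thesis by simp
  qed
  finally show ?thesis by (simp add: x)
qed


lemma finite_disc: "finite (disc_points (real R))"
proof -
  have "disc_points (real R) \<subseteq> {-int R..int R} \<times> {-int R..int R}"
  proof
    fix x assume "x \<in> disc_points (real R)"
    then have h: "(fst x)^2 + (snd x)^2 \<le> (int R)^2" by (simp add: mem_disc)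
    have "(fst x)^2 \<le> (int R)^2" "(snd x)^2 \<le> (int R)^2" using h by (auto intro: order_trans[OF _ h])
    then have "\<bar>fst x\<bar> \<le> \<bar>int R\<bar>" "\<bar>snd x\<bar> \<le> \<bar>int R\<bar>" by (simp_all only: abs_le_square_iff)
    then have "\<bar>fst x\<bar> \<le> int R" "\<bar>snd x\<bar> \<le> int R" by simp_all
    then show "x \<in> {-int R..int R} \<times> {-int R..int R}" by (cases x) auto
  qed
  then show ?thesis by (rule finite_subset) auto
qed

lemma count_interval:
  fixes c d :: int and r :: real
  assumes c: "c > 0" and r: "r \<ge> 0"
  shows "\<bar>real (card {j::int. \<bar>real_of_int (c*j - d)\<bar> \<le> r}) - 2*r/c\<bar> \<le> 1"
proof -
  define \<alpha> where "\<alpha> = (d - r)/c"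
  define \<beta> where "\<beta> = (d + r)/c"
  have cr: "real_of_int c > 0" using c by simp
  have "{j::int. \<bar>real_of_int (c*j - d)\<bar> \<le> r} = {\<lceil>\<alpha>\<rceil>..\<lfloor>\<beta>\<rfloor>}"
  proof -
    have "\<bar>real_of_int (c*j - d)\<bar> \<le> r \<longleftrightarrow> \<alpha> \<le> j \<and> j \<le> \<beta>" for j
      using cr unfolding \<alpha>_def \<beta>_def
      by (auto simp: abs_le_iff field_simps)
    then show ?thesis by (simp add: set_eq_iff ceiling_le_iff le_floor_iff)
  qed
  then have card: "card {j::int. \<bar>real_of_int (c*j - d)\<bar> \<le> r} = nat (\<lfloor>\<beta>\<rfloor> - \<lceil>\<alpha>\<rceil> + 1)"
    by simp
  have ba: "\<beta> - \<alpha> = 2*r/c" unfolding \<alpha>_def \<beta>_def using cr by (simp add: field_simps)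
  have f1: "real_of_int \<lfloor>\<beta>\<rfloor> > \<beta> - 1" "real_of_int \<lfloor>\<beta>\<rfloor> \<le> \<beta>" by linarith+
  have f2: "real_of_int \<lceil>\<alpha>\<rceil> < \<alpha> + 1" "real_of_int \<lceil>\<alpha>\<rceil> \<ge> \<alpha>" by linarith+
  have "2*r/c \<ge> 0" using r cr by simp
  then have pos: "\<lfloor>\<beta>\<rfloor> - \<lceil>\<alpha>\<rceil> + 1 \<ge> 0" using f1 f2 ba by linarith
  then have "real (nat (\<lfloor>\<beta>\<rfloor> - \<lceil>\<alpha>\<rceil> + 1)) = real_of_int \<lfloor>\<beta>\<rfloor> - real_of_int \<lceil>\<alpha>\<rceil> + 1"
    by simp
  then show ?thesis unfolding card using f1 f2 ba by linarith
qed

lemma sum_fibers: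
  fixes L :: "int \<times> int \<Rightarrow> int" and w :: "int \<Rightarrow> real"
  assumes "finite P" "L ` P \<subseteq> S" "finite S"
  shows "(\<Sum>x\<in>P. w (L x)) = (\<Sum>k\<in>S. w k * real (card {x\<in>P. L x = k}))"
proof -
  have "(\<Sum>x\<in>P. w (L x)) = (\<Sum>k\<in>S. \<Sum>x\<in>{x\<in>P. L x = k}. w (L x))"
    using sum.group[OF assms(1) assms(3) assms(2), of "\<lambda>x. w (L x)"] by simp
  also have "\<dots> = (\<Sum>k\<in>S. w k * real (card {x\<in>P. L x = k}))"
    by (intro sum.cong refl) simp
  finally show ?thesis .
qed



lemma fiber_card:
  fixes g :: "int \<Rightarrow> int \<times> int" and m d k :: int
  assumes m: "m > 0" and par: "\<And>x. L x = k \<longleftrightarrow> (\<exists>j. x = g j)" and inj: "inj g"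
    and id: "\<And>j. m*((fst (g j))^2 + (snd (g j))^2) = (m*j - d*k)^2 + k^2"
  shows "card {x\<in>disc_points (real R). L x = k} = card {j. (m*j - d*k)^2 + k^2 \<le> m*(int R)^2}"
proof -
  have mem: "g j \<in> disc_points (real R) \<longleftrightarrow> (m*j - d*k)^2 + k^2 \<le> m*(int R)^2" for j
  proof -
    have "g j \<in> disc_points (real R) \<longleftrightarrow> (fst (g j))^2 + (snd (g j))^2 \<le> (int R)^2"
      by (simp add: mem_disc)
    also have "\<dots> \<longleftrightarrow> m*((fst (g j))^2 + (snd (g j))^2) \<le> m*(int R)^2"
      using m by simp
    finally show ?thesis by (simp only: id)
  qed
  have "{x\<in>disc_points (real R). L x = k} = g ` {j. (m*j - d*k)^2 + k^2 \<le> m*(int R)^2}"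
  proof (rule set_eqI)
    fix x
    show "x \<in> {x\<in>disc_points (real R). L x = k} \<longleftrightarrow> x \<in> g ` {j. (m*j - d*k)^2 + k^2 \<le> m*(int R)^2}"
    proof
      assume "x \<in> {x\<in>disc_points (real R). L x = k}"
      then have x: "x \<in> disc_points (real R)" "L x = k" by auto
      then obtain j where j: "x = g j" using par by blast
      then have "(m*j - d*k)^2 + k^2 \<le> m*(int R)^2" using x(1) mem by blast
      then show "x \<in> g ` {j. (m*j - d*k)^2 + k^2 \<le> m*(int R)^2}" using j by blast
    next
      assume "x \<in> g ` {j. (m*j - d*k)^2 + k^2 \<le> m*(int R)^2}"
      then obtain j where j: "x = g j" "(m*j - d*k)^2 + k^2 \<le> m*(int R)^2" by blast
      then have "x \<in> disc_points (real R)" using mem by blast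
      moreover have "L x = k" using par j(1) by blast
      ultimately show "x \<in> {x\<in>disc_points (real R). L x = k}" by blast
    qed
  qed
  moreover have "inj_on g {j. (m*j - d*k)^2 + k^2 \<le> m*(int R)^2}"
    using inj by (rule inj_on_subset) simp
  ultimately show ?thesis by (simp add: card_image)
qed
lemma card_bound:
  fixes m d k :: int
  assumes m: "m > 0" and k: "k^2 \<le> m*(int R)^2"
  shows "\<bar>real (card {j. (m*j - d*k)^2 + k^2 \<le> m*(int R)^2}) - 2 * sqrt (real_of_int (m*(int R)^2 - k^2))/m\<bar> \<le> 1"
proof -
  define y where "y = real_of_int (m*(int R)^2 - k^2)"
  have "0 \<le> m*(int R)^2 - k^2" using k by linarith
  then have y0: "y \<ge> 0" unfolding y_def by (simp only: of_int_0_le_iff)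
  have y1: "sqrt y \<ge> 0" using y0 by simp
  have "{j. (m*j - d*k)^2 + k^2 \<le> m*(int R)^2} = {j. \<bar>real_of_int (m*j - d*k)\<bar> \<le> sqrt y}"
  proof -
    have "(m*j - d*k)^2 + k^2 \<le> m*(int R)^2 \<longleftrightarrow> \<bar>real_of_int (m*j - d*k)\<bar> \<le> sqrt y" for j
    proof -
      have "(m*j - d*k)^2 + k^2 \<le> m*(int R)^2 \<longleftrightarrow> real_of_int ((m*j - d*k)^2) \<le> y"
      proof -
        have "(m*j - d*k)^2 + k^2 \<le> m*(int R)^2 \<longleftrightarrow> (m*j - d*k)^2 \<le> m*(int R)^2 - k^2" by (rule iffI) linarith+
        then show ?thesis by (simp only: y_def of_int_le_iff)
      qed
      also have "\<dots> \<longleftrightarrow> sqrt (real_of_int ((m*j - d*k)^2)) \<le> sqrt y"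
        by (rule real_sqrt_le_iff[symmetric])
      also have "sqrt (real_of_int ((m*j - d*k)^2)) = \<bar>real_of_int (m*j - d*k)\<bar>"
        by (simp only: of_int_power real_sqrt_abs)
      finally show ?thesis .
    qed
    then show ?thesis by (intro Collect_cong)
  qed
  then show ?thesis using count_interval[OF m y1, of "d*k"] by (simp only: y_def)
qed

lemma line_sum:
  fixes g :: "int \<Rightarrow> int \<Rightarrow> int \<times> int" and m d :: int and L :: "int \<times> int \<Rightarrow> int"
    and w :: "int \<Rightarrow> real"
  assumes m: "m > 0" and par: "\<And>k x. L x = k \<longleftrightarrow> (\<exists>j. x = g k j)" and inj: "\<And>k. inj (g k)"
    and id: "\<And>k j. m*((fst (g k j))^2 + (snd (g k j))^2) = (m*j - d*k)^2 + k^2"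
    and n: "n = \<lfloor>sqrt (real_of_int m) * real R\<rfloor>"
  shows "\<bar>(\<Sum>x\<in>disc_points (real R). w (L x))
          - (\<Sum>k\<in>{-n..n}. w k * (2 * sqrt (real_of_int (m*(int R)^2 - k^2))/m))\<bar>
         \<le> (\<Sum>k\<in>{-n..n}. \<bar>w k\<bar>)"
proof -
  have kb: "k^2 \<le> m*(int R)^2" if "k \<in> {-n..n}" for k
  proof -
    have "\<bar>k\<bar> \<le> n" using that by auto
    then have "real_of_int \<bar>k\<bar> \<le> sqrt (real_of_int m) * real R" using n by linarith
    then have "(real_of_int \<bar>k\<bar>)^2 \<le> (sqrt (real_of_int m) * real R)^2"
      by (intro power_mono) auto
    also have "\<dots> = real_of_int (m*(int R)^2)" using m by (simp add: power_mult_distrib)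
    finally have "real_of_int (k^2) \<le> real_of_int (m*(int R)^2)" by simp
    then show ?thesis by (simp only: of_int_le_iff)
  qed
  have img: "L ` disc_points (real R) \<subseteq> {-n..n}"
  proof
    fix k assume "k \<in> L ` disc_points (real R)"
    then obtain x where x: "x \<in> disc_points (real R)" "k = L x" by blast
    then obtain j where xj: "x = g k j" using par by blast
    have "(fst x)^2 + (snd x)^2 \<le> (int R)^2" using x by (simp add: mem_disc)
    then have "m*((fst x)^2 + (snd x)^2) \<le> m*(int R)^2" using m by simp
    then have "(m*j - d*k)^2 + k^2 \<le> m*(int R)^2" using id[of k j] xj by simp
    then have "k^2 \<le> m*(int R)^2" by (smt (verit) zero_le_power2)
    then have "real_of_int (k^2) \<le> real_of_int (m*(int R)^2)" by (simp only: of_int_le_iff)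
    then have "(real_of_int \<bar>k\<bar>)^2 \<le> (sqrt (real_of_int m) * real R)^2"
      using m by (simp add: power_mult_distrib)
    then have "real_of_int \<bar>k\<bar> \<le> sqrt (real_of_int m) * real R"
      by (rule power2_le_imp_le) (simp add: m less_imp_le)
    then have "\<bar>k\<bar> \<le> n" using n by linarith
    then show "k \<in> {-n..n}" by auto
  qed
  have "(\<Sum>x\<in>disc_points (real R). w (L x))
     = (\<Sum>k\<in>{-n..n}. w k * real (card {x\<in>disc_points (real R). L x = k}))"
    by (rule sum_fibers[OF finite_disc img, where w=w]) simp
  also have "\<dots> = (\<Sum>k\<in>{-n..n}. w k * real (card {j. (m*j - d*k)^2 + k^2 \<le> m*(int R)^2}))"
    by (intro sum.cong refl, subst fiber_card[OF m par inj id]) auto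
  finally have eq: "(\<Sum>x\<in>disc_points (real R). w (L x)) = \<dots>" .
  have "\<bar>(\<Sum>k\<in>{-n..n}. w k * real (card {j. (m*j - d*k)^2 + k^2 \<le> m*(int R)^2}))
     - (\<Sum>k\<in>{-n..n}. w k * (2 * sqrt (real_of_int (m*(int R)^2 - k^2))/m))\<bar>
     = \<bar>\<Sum>k\<in>{-n..n}. w k * (real (card {j. (m*j - d*k)^2 + k^2 \<le> m*(int R)^2})
           - 2 * sqrt (real_of_int (m*(int R)^2 - k^2))/m)\<bar>"
    by (simp only: sum_subtractf[symmetric] right_diff_distrib)
  also have "\<dots> \<le> (\<Sum>k\<in>{-n..n}. \<bar>w k * (real (card {j. (m*j - d*k)^2 + k^2 \<le> m*(int R)^2})
           - 2 * sqrt (real_of_int (m*(int R)^2 - k^2))/m)\<bar>)"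
    by (rule sum_abs)
  also have "\<dots> \<le> (\<Sum>k\<in>{-n..n}. \<bar>w k\<bar>)"
  proof (rule sum_mono)
    fix k assume "k \<in> {-n..n}"
    from card_bound[OF m kb[OF this], of d]
    show "\<bar>w k * (real (card {j. (m*j - d*k)^2 + k^2 \<le> m*(int R)^2})
           - 2 * sqrt (real_of_int (m*(int R)^2 - k^2))/m)\<bar> \<le> \<bar>w k\<bar>"
      by (simp add: abs_mult mult_left_le)
  qed
  finally show ?thesis unfolding eq .
qed




lemma step_mvt:
  fixes F f :: "real \<Rightarrow> real" and a :: real
  assumes cont: "continuous_on {a..a+1} F"
    and der: "\<And>t. a < t \<Longrightarrow> t < a + 1 \<Longrightarrow> (F has_real_derivative f t) (at t)"
  shows "\<exists>\<xi>. a < \<xi> \<and> \<xi> < a + 1 \<and> F (a + 1) - F a = f \<xi>"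
proof -
  have "\<exists>l z. a < z \<and> z < a + 1 \<and> DERIV F z :> l \<and> F (a+1) - F a = (a + 1 - a) * l"
    by (rule MVT) (use cont der real_differentiable_def in auto)
  then obtain l z where z: "a < z" "z < a + 1" "DERIV F z :> l" "F (a+1) - F a = (a + 1 - a) * l"
    by blast
  have "l = f z" using DERIV_unique[OF z(3) der[OF z(1) z(2)]] .
  then show ?thesis using z by auto
qed

lemma telescope_dec:
  fixes g :: "nat \<Rightarrow> real"
  assumes "m \<le> n"
  shows "(\<Sum>i = m..<n. g i - g (Suc i)) = g m - g n"
proof -
  have "(\<Sum>i = m..<n. g i - g (Suc i)) = - (\<Sum>i = m..<n. g (Suc i) - g i)"
    by (simp add: sum_negf[symmetric])
  also have "\<dots> = g m - g n" using sum_Suc_diff'[OF assms, of g] by simp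
  finally show ?thesis .
qed

lemma unimodal_sum:
  fixes F f :: "real \<Rightarrow> real" and n :: nat and p H :: real
  assumes cont: "continuous_on {0..real n} F"
    and der: "\<And>t. 0 < t \<Longrightarrow> t < real n \<Longrightarrow> (F has_real_derivative f t) (at t)"
    and inc: "\<And>s t. 0 \<le> s \<Longrightarrow> s \<le> t \<Longrightarrow> t \<le> p \<Longrightarrow> f s \<le> f t"
    and dec: "\<And>s t. p \<le> s \<Longrightarrow> s \<le> t \<Longrightarrow> t \<le> real n \<Longrightarrow> f t \<le> f s"
    and bnd: "\<And>t. 0 \<le> t \<Longrightarrow> t \<le> real n \<Longrightarrow> 0 \<le> f t \<and> f t \<le> H"
  shows "\<bar>(\<Sum>k<n. f (real k)) - (F (real n) - F 0)\<bar> \<le> 3 * H"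
proof -
  define g where "g i = f (real i)" for i :: nat
  define e where "e k = F (real (Suc k)) - F (real k) - g k" for k :: nat
  have tel: "(\<Sum>k<n. e k) = (F (real n) - F 0) - (\<Sum>k<n. f (real k))"
  proof -
    have "(\<Sum>k<n. e k) = (\<Sum>k<n. F (real (Suc k)) - F (real k)) - (\<Sum>k<n. g k)"
      unfolding e_def by (simp add: sum_subtractf)
    also have "(\<Sum>k<n. F (real (Suc k)) - F (real k)) = F (real n) - F (real 0)"
      by (rule sum_lessThan_telescope[of "\<lambda>k. F (real k)"])
    finally show ?thesis by (simp add: g_def)
  qed
  have props: "\<bar>e k\<bar> \<le> H \<and> (real k + 1 \<le> p \<longrightarrow> \<bar>e k\<bar> \<le> g (Suc k) - g k)
      \<and> (p \<le> real k \<longrightarrow> \<bar>e k\<bar> \<le> g k - g (Suc k))" if k: "k < n" for k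
  proof -
    have kn: "real k + 1 \<le> real n" using k by simp
    have c: "continuous_on {real k..real k+1} F"
      by (rule continuous_on_subset[OF cont]) (use kn in auto)
    obtain \<xi> where xi: "real k < \<xi>" "\<xi> < real k + 1" "F (real k + 1) - F (real k) = f \<xi>"
      using step_mvt[OF c, of f] der kn by (smt (verit) of_nat_0_le_iff)
    have ek: "e k = f \<xi> - f (real k)" unfolding e_def g_def using xi(3) by (simp add: add.commute)
    have b1: "0 \<le> f \<xi> \<and> f \<xi> \<le> H" using bnd[of \<xi>] xi kn by simp
    have b2: "0 \<le> f (real k) \<and> f (real k) \<le> H" using bnd[of "real k"] kn by simp
    have gS: "g (Suc k) = f (real k + 1)" by (simp add: g_def add.commute)
    have A: "\<bar>e k\<bar> \<le> g (Suc k) - g k" if "real k + 1 \<le> p"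
    proof -
      have "f (real k) \<le> f \<xi>" using inc[of "real k" \<xi>] xi that by simp
      moreover have "f \<xi> \<le> f (real k + 1)" using inc[of \<xi> "real k + 1"] xi that by simp
      ultimately show ?thesis using ek gS by (simp add: g_def)
    qed
    have B: "\<bar>e k\<bar> \<le> g k - g (Suc k)" if "p \<le> real k"
    proof -
      have "f \<xi> \<le> f (real k)" using dec[of "real k" \<xi>] xi that kn by simp
      moreover have "f (real k + 1) \<le> f \<xi>" using dec[of \<xi> "real k + 1"] xi that kn by simp
      ultimately show ?thesis using ek gS by (simp add: g_def)
    qed
    show ?thesis using A B b1 b2 ek by auto
  qed
  define q where "q = min n (nat \<lfloor>p\<rfloor>)"
  have qn: "q \<le> n" by (simp add: q_def)
  have split: "(\<Sum>k<n. \<bar>e k\<bar>) = (\<Sum>k=0..<q. \<bar>e k\<bar>) + (\<Sum>k=q..<n. \<bar>e k\<bar>)"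
    using sum.atLeastLessThan_concat[of 0 q n "\<lambda>k. \<bar>e k\<bar>"] qn by (simp add: atLeast0LessThan)
  have s1: "(\<Sum>k=0..<q. \<bar>e k\<bar>) \<le> H"
  proof -
    have "(\<Sum>k=0..<q. \<bar>e k\<bar>) \<le> (\<Sum>k=0..<q. g (Suc k) - g k)"
    proof (rule sum_mono)
      fix k assume k: "k \<in> {0..<q}"
      then have "k < n" "k < nat \<lfloor>p\<rfloor>" using qn by (auto simp: q_def)
      then have "real k + 1 \<le> p" by linarith
      then show "\<bar>e k\<bar> \<le> g (Suc k) - g k" using props[OF \<open>k < n\<close>] by blast
    qed
    also have "\<dots> = g q - g 0" using sum_Suc_diff'[of 0 q g] by simp
    also have "\<dots> \<le> H" using bnd[of "real q"] bnd[of 0] qn by (simp add: g_def)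
    finally show ?thesis .
  qed
  have s2: "(\<Sum>k=q..<n. \<bar>e k\<bar>) \<le> 2 * H"
  proof (cases "q < n")
    case False
    then have "q = n" using qn by simp
    then show ?thesis using bnd[of 0] by simp
  next
    case True
    then have qp: "q = nat \<lfloor>p\<rfloor>" by (simp add: q_def)
    have "(\<Sum>k=q..<n. \<bar>e k\<bar>) = \<bar>e q\<bar> + (\<Sum>k=Suc q..<n. \<bar>e k\<bar>)"
      using True by (simp add: sum.atLeast_Suc_lessThan)
    also have "(\<Sum>k=Suc q..<n. \<bar>e k\<bar>) \<le> (\<Sum>k=Suc q..<n. g k - g (Suc k))"
    proof (rule sum_mono)
      fix k assume k: "k \<in> {Suc q..<n}"
      then have "k < n" "Suc (nat \<lfloor>p\<rfloor>) \<le> k" using qp by auto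
      then have "p \<le> real k" by linarith
      then show "\<bar>e k\<bar> \<le> g k - g (Suc k)" using props[OF \<open>k < n\<close>] by blast
    qed
    also have "\<dots> = g (Suc q) - g n" using telescope_dec[of "Suc q" n g] True by simp
    also have "\<dots> \<le> H" using bnd[of "real (Suc q)"] bnd[of "real n"] True by (simp add: g_def)
    finally show ?thesis using props[OF True] by linarith
  qed
  have "\<bar>(\<Sum>k<n. f (real k)) - (F (real n) - F 0)\<bar> = \<bar>\<Sum>k<n. e k\<bar>" using tel by linarith
  also have "\<dots> \<le> (\<Sum>k<n. \<bar>e k\<bar>)" by (rule sum_abs)
  finally show ?thesis using split s1 s2 by linarith
qed



lemma circle_sum:
  fixes r :: real and n :: nat
  assumes r: "r = real n" and n: "n \<ge> 1"
  shows "\<bar>(\<Sum>k<n. sqrt (r^2 - (real k)^2)) - pi * r^2 / 4\<bar> \<le> 3 * r"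
proof -
  have r0: "r > 0" using r n by simp
  define F where "F t = (t * sqrt (r^2 - t^2) + r^2 * arcsin (t / r)) / 2" for t
  have cont: "continuous_on {0..real n} F"
    unfolding F_def r[symmetric] using r0 by (auto intro!: continuous_intros simp: field_simps)
  have der: "(F has_real_derivative sqrt (r^2 - t^2)) (at t)" if t: "0 < t" "t < real n" for t
  proof -
    have tr: "t < r" using t r by simp
    have pos: "r^2 - t^2 > 0" using t tr by (smt (verit) mult_strict_mono power2_eq_square)
    have s: "sqrt (r^2 - t^2) > 0" using pos by simp
    have d1: "((\<lambda>t. sqrt (r^2 - t^2)) has_real_derivative (- t / sqrt (r^2 - t^2))) (at t)"
    proof -
      have h: "((\<lambda>t. r^2 - t^2) has_real_derivative (0 - real 2 * t ^ (2 - Suc 0))) (at t)"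
        by (intro DERIV_diff DERIV_const DERIV_pow)
      have "((\<lambda>t. sqrt (r^2 - t^2)) has_real_derivative
          (inverse (sqrt (r^2 - t^2)) / 2 * (0 - real 2 * t ^ (2 - Suc 0)))) (at t)"
        by (rule DERIV_chain2[OF DERIV_real_sqrt[OF pos] h])
      moreover have "inverse (sqrt (r^2 - t^2)) / 2 * (0 - real 2 * t ^ (2 - Suc 0)) = - t / sqrt (r^2 - t^2)"
        by (simp add: field_simps)
      ultimately show ?thesis by simp
    qed
    have q: "- 1 < t / r" "t / r < 1" using t tr r0 by (auto simp: field_simps)
    have d2: "((\<lambda>t. arcsin (t / r)) has_real_derivative (inverse (sqrt (1 - (t/r)^2)) * (1 / r))) (at t)"
      by (rule DERIV_chain2[OF DERIV_arcsin[OF q] DERIV_cdivide[OF DERIV_ident]])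
    have e1: "sqrt (1 - (t/r)^2) = sqrt (r^2 - t^2) / r"
    proof -
      have "1 - (t/r)^2 = (r^2 - t^2) / r^2" using r0 by (simp add: field_simps)
      then show ?thesis using r0 by (simp add: real_sqrt_divide)
    qed
    have d: "(F has_real_derivative
        ((1 * sqrt (r^2 - t^2) + (- t / sqrt (r^2 - t^2)) * t)
          + r^2 * (inverse (sqrt (1 - (t/r)^2)) * (1 / r))) / 2) (at t)"
      unfolding F_def
      by (intro DERIV_cdivide DERIV_add DERIV_mult DERIV_cmult d1 d2 DERIV_ident)
    have eq: "((1 * sqrt (r^2 - t^2) + (- t / sqrt (r^2 - t^2)) * t)
          + r^2 * (inverse (sqrt (1 - (t/r)^2)) * (1 / r))) / 2 = sqrt (r^2 - t^2)"
    proof -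
      have sq: "sqrt (r^2 - t^2) * sqrt (r^2 - t^2) = r^2 - t^2" using pos by simp
      show ?thesis unfolding e1 using s r0 sq by (simp add: field_simps power2_eq_square)
    qed
    show ?thesis using d unfolding eq .
  qed
  have main: "\<bar>(\<Sum>k<n. sqrt (r^2 - (real k)^2)) - (F (real n) - F 0)\<bar> \<le> 3 * r"
  proof (rule unimodal_sum[OF cont der, where p = 0])
    fix s t :: real assume "0 \<le> s" "s \<le> t" "t \<le> 0"
    then show "sqrt (r^2 - s^2) \<le> sqrt (r^2 - t^2)" by simp
  next
    fix s t :: real assume st: "0 \<le> s" "s \<le> t" "t \<le> real n"
    have "s^2 \<le> t^2" using st by (intro power_mono) auto
    then show "sqrt (r^2 - t^2) \<le> sqrt (r^2 - s^2)" by simp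
  next
    fix t :: real assume t: "0 \<le> t" "t \<le> real n"
    have "t^2 \<le> r^2" using t r by (intro power_mono) auto
    moreover have "sqrt (r^2 - t^2) \<le> sqrt (r^2)" using t by (simp only: real_sqrt_le_iff) simp
    moreover have "sqrt (r^2) = r" using r0 by simp
    ultimately show "0 \<le> sqrt (r^2 - t^2) \<and> sqrt (r^2 - t^2) \<le> r" using r0 by simp
  qed auto
  have "F (real n) = pi * r^2 / 4" unfolding F_def r[symmetric] using r0 by simp
  moreover have "F 0 = 0" by (simp add: F_def)
  ultimately show ?thesis using main by simp
qed



lemma phi_sqrt: "t \<ge> 0 \<Longrightarrow> t * sqrt x = sqrt (t^2 * x)"
  by (simp add: real_sqrt_mult)

lemma arc_sum:
  fixes b :: real and n :: nat
  assumes b: "b \<ge> 1" and n: "n = nat \<lfloor>b\<rfloor>"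
  shows "\<bar>(\<Sum>k<Suc n. real k * sqrt (b^2 - (real k)^2)) - b^3/3\<bar> \<le> 5 * b^2"
proof -
  have nb: "real n \<le> b" "b < real n + 1" using n b by linarith+
  define F where "F t = - ((b^2 - t^2) * sqrt (b^2 - t^2) / 3)" for t
  define f where "f t = t * sqrt (b^2 - t^2)" for t
  have cont: "continuous_on {0..real n} F"
    unfolding F_def by (intro continuous_intros) auto
  have der: "(F has_real_derivative f t) (at t)" if t: "0 < t" "t < real n" for t
  proof -
    have tr: "t < b" using t nb by simp
    have pos: "b^2 - t^2 > 0" using t tr by (smt (verit) mult_strict_mono power2_eq_square)
    have s: "sqrt (b^2 - t^2) > 0" using pos by simp
    have h: "((\<lambda>t. b^2 - t^2) has_real_derivative (0 - real 2 * t ^ (2 - Suc 0))) (at t)"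
      by (intro DERIV_diff DERIV_const DERIV_pow)
    have d1: "((\<lambda>t. sqrt (b^2 - t^2)) has_real_derivative
          (inverse (sqrt (b^2 - t^2)) / 2 * (0 - real 2 * t ^ (2 - Suc 0)))) (at t)"
      by (rule DERIV_chain2[OF DERIV_real_sqrt[OF pos] h])
    have d: "(F has_real_derivative - (((0 - real 2 * t ^ (2 - Suc 0)) * sqrt (b^2 - t^2)
        + (inverse (sqrt (b^2 - t^2)) / 2 * (0 - real 2 * t ^ (2 - Suc 0))) * (b^2 - t^2)) / 3)) (at t)"
      unfolding F_def by (intro DERIV_minus DERIV_cdivide DERIV_mult h d1)
    have sq: "sqrt (b^2 - t^2) * sqrt (b^2 - t^2) = b^2 - t^2" using pos by simp
    have eq: "- (((0 - real 2 * t ^ (2 - Suc 0)) * sqrt (b^2 - t^2)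
        + (inverse (sqrt (b^2 - t^2)) / 2 * (0 - real 2 * t ^ (2 - Suc 0))) * (b^2 - t^2)) / 3) = f t"
    proof -
      have A: "(inverse (sqrt (b^2 - t^2)) / 2 * (0 - real 2 * t ^ (2 - Suc 0))) * (b^2 - t^2)
          = - t * sqrt (b^2 - t^2)"
        using s sq by (simp add: field_simps)
      have B: "(0 - real 2 * t ^ (2 - Suc 0)) = - 2 * t" by simp
      show ?thesis unfolding A unfolding B f_def by (simp add: algebra_simps)
    qed
    show ?thesis using d unfolding eq .
  qed
  define p where "p = b / sqrt 2"
  have p2: "p^2 = b^2 / 2" unfolding p_def by (simp add: power_divide)
  have p0: "p \<ge> 0" unfolding p_def using b by simp
  have fsq: "f t = sqrt (t^2 * (b^2 - t^2))" if "t \<ge> 0" for t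
    unfolding f_def using phi_sqrt[OF that] .
  have main: "\<bar>(\<Sum>k<n. f (real k)) - (F (real n) - F 0)\<bar> \<le> 3 * b^2"
  proof (rule unimodal_sum[OF cont der, where p = p])
    fix s t :: real assume st: "0 \<le> s" "s \<le> t" "t \<le> p"
    have ss: "s^2 \<le> t^2" using st by (intro power_mono) auto
    have tt: "t^2 \<le> p^2" using st by (intro power_mono) auto
    have "t^2 * (b^2 - t^2) - s^2 * (b^2 - s^2) = (t^2 - s^2) * (b^2 - t^2 - s^2)"
      by (simp add: algebra_simps power2_eq_square)
    also have "\<dots> \<ge> 0" using ss tt p2 by (intro mult_nonneg_nonneg) auto
    finally have "s^2 * (b^2 - s^2) \<le> t^2 * (b^2 - t^2)" by simp
    then show "f s \<le> f t" using fsq st by simp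
  next
    fix s t :: real assume st: "p \<le> s" "s \<le> t" "t \<le> real n"
    have ss: "s^2 \<le> t^2" using st p0 by (intro power_mono) auto
    have tt: "p^2 \<le> s^2" using st p0 by (intro power_mono) auto
    have "s^2 * (b^2 - s^2) - t^2 * (b^2 - t^2) = (t^2 - s^2) * (t^2 + s^2 - b^2)"
      by (simp add: algebra_simps power2_eq_square)
    also have "\<dots> \<ge> 0" using ss tt p2 by (intro mult_nonneg_nonneg) auto
    finally have "t^2 * (b^2 - t^2) \<le> s^2 * (b^2 - s^2)" by simp
    then show "f t \<le> f s" using fsq st p0 by simp
  next
    fix t :: real assume t: "0 \<le> t" "t \<le> real n"
    have tb: "t \<le> b" using t nb by simp
    have "t^2 \<le> b^2" using t tb by (intro power_mono) auto
    moreover have "sqrt (b^2 - t^2) \<le> sqrt (b^2)" using t by (simp only: real_sqrt_le_iff) simp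
    moreover have "sqrt (b^2) = b" using b by simp
    ultimately have "sqrt (b^2 - t^2) \<le> b" "0 \<le> sqrt (b^2 - t^2)" by simp_all
    then have "t * sqrt (b^2 - t^2) \<le> b * b" "0 \<le> t * sqrt (b^2 - t^2)" using t tb
      by (auto intro: mult_mono)
    then show "0 \<le> f t \<and> f t \<le> b^2" unfolding f_def
      by (simp add: power2_eq_square)
  qed
  have F0: "F 0 = -(b^3/3)" unfolding F_def using b by (simp add: power3_eq_cube power2_eq_square)
  have Fn: "\<bar>F (real n)\<bar> \<le> b^2"
  proof -
    define u where "u = b^2 - (real n)^2"
    have u0: "u \<ge> 0" unfolding u_def using nb by (simp add: power_mono)
    have u1: "u \<le> 2 * b" unfolding u_def
    proof -
      have "b^2 - (real n)^2 = (b - real n) * (b + real n)" by (simp add: algebra_simps power2_eq_square)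
      also have "\<dots> \<le> 1 * (b + real n)" using nb by (intro mult_right_mono) auto
      finally show "b^2 - (real n)^2 \<le> 2 * b" using nb by simp
    qed
    have su: "sqrt u \<le> b"
    proof -
      have "u \<le> b^2" unfolding u_def by simp
      then have "sqrt u \<le> sqrt (b^2)" by (simp only: real_sqrt_le_iff)
      then show ?thesis using b by simp
    qed
    have "u * sqrt u \<le> (2 * b) * b" using u0 u1 su by (intro mult_mono) auto
    moreover have "\<bar>F (real n)\<bar> = u * sqrt u / 3" unfolding F_def u_def[symmetric] using u0 by simp
    ultimately show ?thesis by (simp add: power2_eq_square)
  qed
  have fn: "0 \<le> f (real n) \<and> f (real n) \<le> b^2"
  proof -
    have "sqrt (b^2 - (real n)^2) \<le> sqrt (b^2)" by (simp only: real_sqrt_le_iff) simp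
    then have "sqrt (b^2 - (real n)^2) \<le> b" using b by simp
    moreover have "0 \<le> sqrt (b^2 - (real n)^2)" using nb by (simp add: power_mono)
    ultimately have "real n * sqrt (b^2 - (real n)^2) \<le> b * b" "0 \<le> real n * sqrt (b^2 - (real n)^2)"
      using nb by (auto intro: mult_mono)
    then show ?thesis unfolding f_def by (simp add: power2_eq_square)
  qed
  have "(\<Sum>k<Suc n. real k * sqrt (b^2 - (real k)^2)) = (\<Sum>k<n. f (real k)) + f (real n)"
    by (simp add: f_def)
  then show ?thesis using main F0 Fn fn by (simp add: abs_le_iff)
qed



lemma sym_sum:
  fixes h :: "int \<Rightarrow> real"
  assumes ev: "\<And>k. h (-k) = h k"
  shows "(\<Sum>k\<in>{-int n..int n}. h k) = 2 * (\<Sum>i<Suc n. h (int i)) - h 0"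
proof (induction n)
  case 0
  then show ?case by simp
next
  case (Suc n)
  have eq: "{-int (Suc n)..int (Suc n)} = insert (-int (Suc n)) (insert (int (Suc n)) {-int n..int n})"
    by auto
  have "(\<Sum>k\<in>{-int (Suc n)..int (Suc n)}. h k) = h (-int (Suc n)) + (h (int (Suc n)) + (\<Sum>k\<in>{-int n..int n}. h k))"
    unfolding eq by (simp add: sum.insert)
  also have "\<dots> = 2 * h (int (Suc n)) + (\<Sum>k\<in>{-int n..int n}. h k)" using ev[of "int (Suc n)"] by linarith
  finally show ?case using Suc.IH by simp
qed

lemma abs_cmul: "(c::real) \<ge> 0 \<Longrightarrow> \<bar>c*x - c*y\<bar> = c*\<bar>x - y\<bar>"
  by (simp add: abs_mult right_diff_distrib[symmetric])

lemma line_abs: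
  fixes g :: "int \<Rightarrow> int \<Rightarrow> int \<times> int" and m d :: int and L :: "int \<times> int \<Rightarrow> int" and R :: nat
  assumes m: "m > 0" and par: "\<And>k x. L x = k \<longleftrightarrow> (\<exists>j. x = g k j)" and inj: "\<And>k. inj (g k)"
    and id: "\<And>k j. m*((fst (g k j))^2 + (snd (g k j))^2) = (m*j - d*k)^2 + k^2"
    and R: "R \<ge> 1"
  shows "\<bar>(\<Sum>x\<in>disc_points (real R). \<bar>real_of_int (L x)\<bar>) - 4/3 * sqrt (real_of_int m) * real R ^ 3\<bar>
          \<le> (3 * real_of_int m + 20) * real R ^ 2"
proof -
  define b where "b = sqrt (real_of_int m) * real R"
  have m1: "real_of_int m \<ge> 1" using m by simp
  have sm: "sqrt (real_of_int m) \<ge> 1" using m1 by simp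
  have b1: "b \<ge> 1" unfolding b_def using sm R by (metis mult_mono' of_nat_1 of_nat_le_iff mult_1_right order_trans zero_le_one)
  have b2: "b^2 = real_of_int m * real R ^ 2" unfolding b_def using m1 by (simp add: power_mult_distrib)
  define N where "N = nat \<lfloor>b\<rfloor>"
  have nN: "\<lfloor>b\<rfloor> = int N" unfolding N_def using b1 by simp
  have Nb: "real N \<le> b" using nN b1 by linarith
  from line_sum[OF m par inj id, of "\<lfloor>b\<rfloor>" R "\<lambda>k. \<bar>real_of_int k\<bar>"]
  have ls: "\<bar>(\<Sum>x\<in>disc_points (real R). \<bar>real_of_int (L x)\<bar>)
          - (\<Sum>k\<in>{-int N..int N}. \<bar>real_of_int k\<bar> * (2 * sqrt (real_of_int (m*(int R)^2 - k^2))/m))\<bar>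
         \<le> (\<Sum>k\<in>{-int N..int N}. \<bar>real_of_int k\<bar>)"
    unfolding b_def[symmetric] nN by simp
  have e1: "(\<Sum>k\<in>{-int N..int N}. \<bar>real_of_int k\<bar>) \<le> 3 * b^2"
  proof -
    have "(\<Sum>k\<in>{-int N..int N}. \<bar>real_of_int k\<bar>) \<le> (\<Sum>k\<in>{-int N..int N}. real N)"
      by (intro sum_mono) auto
    also have "\<dots> = (2 * real N + 1) * real N" by simp
    also have "\<dots> \<le> (3 * b) * b" using Nb b1 by (intro mult_mono) auto
    finally show ?thesis by (simp add: power2_eq_square)
  qed
  define h where "h k = \<bar>real_of_int k\<bar> * (2 * sqrt (real_of_int (m*(int R)^2 - k^2))/m)" for k
  have hev: "h (-k) = h k" for k unfolding h_def by simp
  have hk: "h (int i) = 2 / m * (real i * sqrt (b^2 - (real i)^2))" for i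
    unfolding h_def b2 by simp
  have "(\<Sum>k\<in>{-int N..int N}. h k) = 2 * (\<Sum>i<Suc N. h (int i)) - h 0"
    by (rule sym_sum[of h, OF hev])
  also have "\<dots> = 2 * (2 / m * (\<Sum>i<Suc N. real i * sqrt (b^2 - (real i)^2))) - 0"
    unfolding hk sum_distrib_left[symmetric] by (simp add: h_def)
  also have "\<dots> = 4 / m * (\<Sum>i<Suc N. real i * sqrt (b^2 - (real i)^2))"
    by simp
  finally have hs: "(\<Sum>k\<in>{-int N..int N}. h k) = 4 / m * (\<Sum>i<Suc N. real i * sqrt (b^2 - (real i)^2))" .
  have arc: "\<bar>(\<Sum>i<Suc N. real i * sqrt (b^2 - (real i)^2)) - b^3/3\<bar> \<le> 5 * b^2"
    by (rule arc_sum[OF b1 N_def])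
  have "\<bar>4 / m * (\<Sum>i<Suc N. real i * sqrt (b^2 - (real i)^2)) - 4 / m * (b^3/3)\<bar>
      = 4 / m * \<bar>(\<Sum>i<Suc N. real i * sqrt (b^2 - (real i)^2)) - b^3/3\<bar>"
    by (rule abs_cmul) (use m1 in simp)
  also have "\<dots> \<le> 4 / m * (5 * b^2)" using arc m1 by (intro mult_left_mono) auto
  also have "\<dots> = 20 * real R ^ 2" unfolding b2 using m1 by simp
  finally have main: "\<bar>(\<Sum>k\<in>{-int N..int N}. h k) - 4 / m * (b^3/3)\<bar> \<le> 20 * real R ^ 2"
    unfolding hs .
  have b3: "4 / m * (b^3/3) = 4/3 * sqrt (real_of_int m) * real R ^ 3"
  proof -
    have "b^3 = b^2 * b" by (simp add: power3_eq_cube power2_eq_square)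
    then show ?thesis unfolding b2 using m1 by (simp add: b_def field_simps power3_eq_cube)
  qed
  have "3 * b^2 = 3 * real_of_int m * real R ^ 2" unfolding b2 by simp
  then show ?thesis using ls e1 main b3 unfolding h_def by (simp add: algebra_simps)
qed



lemma orbit_length_eq:
  "orbit_length (a, b) = 2 * (\<bar>real_of_int (2*a - b)\<bar> + \<bar>real_of_int (a + b)\<bar> + \<bar>real_of_int (a - 2*b)\<bar>)"
proof -
  have path: "orbit_path (a,b) = [(a,b), (-a+b,b), (-a+b,-a), (-b,-a), (-b,a-b), (a,a-b)]"
    by (simp add: orbit_path_def K1_def K2_def)
  have six: "{..<6::nat} = {0,1,2,3,4,5}" by auto
  have e: "\<And>u v. edist u v = sqrt ((real_of_int (fst u - fst v))\<^sup>2 + (real_of_int (snd u - snd v))\<^sup>2)"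
    by (simp add: edist_def enorm_def)
  have "orbit_length (a,b) = \<bar>real_of_int (2*a - b)\<bar> + \<bar>real_of_int (a + b)\<bar> + \<bar>real_of_int (a - 2*b)\<bar>
     + \<bar>real_of_int (2*a - b)\<bar> + \<bar>real_of_int (a + b)\<bar> + \<bar>real_of_int (a - 2*b)\<bar>"
    unfolding orbit_length_def path Let_def six
    by (simp add: e algebra_simps abs_minus_commute)
  then show ?thesis by simp
qed

lemma count_est:
  fixes R :: nat assumes R: "R \<ge> 1"
  shows "\<bar>real (card (disc_points (real R))) - pi * real R ^ 2\<bar> \<le> 17 * real R"
proof -
  define r where "r = real R"
  have r1: "r \<ge> 1" using R by (simp add: r_def)
  have par: "\<And>k x. fst x = k \<longleftrightarrow> (\<exists>j. x = (\<lambda>k j. (k, j)) k j)" by auto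
  have inj: "\<And>k. inj ((\<lambda>k j. (k, j)) k)" by (auto simp: inj_on_def)
  have id: "\<And>k j. 1*((fst ((\<lambda>k j. (k::int, j::int)) k j))^2 + (snd ((\<lambda>k j. (k, j)) k j))^2)
      = (1*j - 0*k)^2 + k^2" by simp
  from line_sum[OF _ par inj id, of "int R" R "\<lambda>_. 1"]
  have ls: "\<bar>(\<Sum>x\<in>disc_points (real R). (1::real))
          - (\<Sum>k\<in>{-int R..int R}. 1 * (2 * sqrt (real_of_int (1*(int R)^2 - k^2))/1))\<bar>
         \<le> (\<Sum>k\<in>{-int R..int R}. \<bar>1::real\<bar>)" by simp
  define h where "h k = 2 * sqrt (real_of_int ((int R)^2 - k^2))" for k
  have hev: "h (-k) = h k" for k unfolding h_def by simp
  have hk: "h (int i) = 2 * sqrt (r^2 - (real i)^2)" for i unfolding h_def r_def by simp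
  have "(\<Sum>k\<in>{-int R..int R}. h k) = 2 * (\<Sum>i<Suc R. h (int i)) - h 0"
    by (rule sym_sum[of h, OF hev])
  also have "\<dots> = 4 * (\<Sum>i<R. sqrt (r^2 - (real i)^2)) - 2 * r"
    unfolding hk by (simp add: h_def r_def sum_distrib_left[symmetric])
  finally have hs: "(\<Sum>k\<in>{-int R..int R}. h k) = 4 * (\<Sum>i<R. sqrt (r^2 - (real i)^2)) - 2 * r" .
  have cs: "\<bar>(\<Sum>k<R. sqrt (r^2 - (real k)^2)) - pi * r^2 / 4\<bar> \<le> 3 * r"
    by (rule circle_sum[OF r_def R])
  have ls': "\<bar>real (card (disc_points (real R))) - (\<Sum>k\<in>{-int R..int R}. h k)\<bar> \<le> 2 * r + 1"
    using ls unfolding h_def r_def by simp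
  show ?thesis using ls' hs cs r1 unfolding r_def[symmetric] by (simp add: abs_le_iff) 
qed

lemma card_lower:
  fixes R :: nat assumes R: "R \<ge> 1"
  shows "real (card (disc_points (real R))) \<ge> real R ^ 2"
proof -
  define f where "f p = (int (fst p) - int (snd p), int (fst p) + int (snd p) - (int R - 1))" for p :: "nat \<times> nat"
  have inj: "inj_on f ({0..<R} \<times> {0..<R})"
    by (auto simp: inj_on_def f_def)
  have sub: "f ` ({0..<R} \<times> {0..<R}) \<subseteq> disc_points (real R)"
  proof
    fix y assume "y \<in> f ` ({0..<R} \<times> {0..<R})"
    then obtain i j where ij: "i < R" "j < R" "y = f (i, j)" by auto
    define u where "u = 2 * int i - (int R - 1)"
    define v where "v = 2 * int j - (int R - 1)"
    have u: "\<bar>u\<bar> \<le> \<bar>int R - 1\<bar>" "\<bar>v\<bar> \<le> \<bar>int R - 1\<bar>" using ij R by (auto simp: u_def v_def)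
    then have u2: "u^2 \<le> (int R - 1)^2" "v^2 \<le> (int R - 1)^2" by (simp_all only: abs_le_square_iff)
    have "2 * ((fst y)^2 + (snd y)^2) = u^2 + v^2"
      unfolding ij(3) f_def u_def v_def by (simp add: power2_eq_square algebra_simps)
    also have "\<dots> \<le> 2 * (int R - 1)^2" using u2 by simp
    finally have "(fst y)^2 + (snd y)^2 \<le> (int R - 1)^2" by simp
    also have "\<dots> \<le> (int R)^2" using R by (intro power_mono) auto
    finally show "y \<in> disc_points (real R)" by (simp add: mem_disc)
  qed
  have "card ({0..<R} \<times> {0..<R}) \<le> card (disc_points (real R))"
    by (rule card_inj_on_le[OF inj sub finite_disc])
  then have "R * R \<le> card (disc_points (real R))" by (simp add: card_cartesian_product)
  then have "real (R * R) \<le> real (card (disc_points (real R)))" by (simp only: of_nat_le_iff)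
  then show ?thesis by (simp add: power2_eq_square)
qed



lemma S1_est:
  fixes R :: nat assumes R: "R \<ge> 1"
  shows "\<bar>(\<Sum>x\<in>disc_points (real R). \<bar>real_of_int (2 * fst x - snd x)\<bar>) - 4/3 * sqrt 5 * real R ^ 3\<bar>
          \<le> 35 * real R ^ 2"
proof -
  have par: "\<And>k (x::int \<times> int). 2 * fst x - snd x = k \<longleftrightarrow> (\<exists>j. x = (\<lambda>k j. (j, 2*j - k)) k j)" by auto
  have inj: "\<And>k. inj ((\<lambda>k j. (j::int, 2*j - k)) k)" by (auto simp: inj_on_def)
  have id: "\<And>k j. (5::int)*((fst ((\<lambda>k j. (j::int, 2*j - k)) k j))^2 + (snd ((\<lambda>k j. (j, 2*j - k)) k j))^2)
      = (5*j - 2*k)^2 + k^2" by (simp add: power2_eq_square algebra_simps)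
  from line_abs[OF _ par inj id R] show ?thesis by simp
qed

lemma S2_est:
  fixes R :: nat assumes R: "R \<ge> 1"
  shows "\<bar>(\<Sum>x\<in>disc_points (real R). \<bar>real_of_int (fst x + snd x)\<bar>) - 4/3 * sqrt 2 * real R ^ 3\<bar>
          \<le> 26 * real R ^ 2"
proof -
  have par: "\<And>k (x::int \<times> int). fst x + snd x = k \<longleftrightarrow> (\<exists>j. x = (\<lambda>k j. (j, k - j)) k j)" by auto
  have inj: "\<And>k. inj ((\<lambda>k j. (j::int, k - j)) k)" by (auto simp: inj_on_def)
  have id: "\<And>k j. (2::int)*((fst ((\<lambda>k j. (j::int, k - j)) k j))^2 + (snd ((\<lambda>k j. (j, k - j)) k j))^2)
      = (2*j - 1*k)^2 + k^2" by (simp add: power2_eq_square algebra_simps)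
  from line_abs[OF _ par inj id R] show ?thesis by simp
qed

lemma S3_est:
  fixes R :: nat assumes R: "R \<ge> 1"
  shows "\<bar>(\<Sum>x\<in>disc_points (real R). \<bar>real_of_int (fst x - 2 * snd x)\<bar>) - 4/3 * sqrt 5 * real R ^ 3\<bar>
          \<le> 35 * real R ^ 2"
proof -
  have par: "\<And>k (x::int \<times> int). fst x - 2 * snd x = k \<longleftrightarrow> (\<exists>j. x = (\<lambda>k j. (k + 2*j, j)) k j)" by auto
  have inj: "\<And>k. inj ((\<lambda>k j. (k + 2*j, j::int)) k)" by (auto simp: inj_on_def)
  have id: "\<And>k j. (5::int)*((fst ((\<lambda>k j. (k + 2*j, j::int)) k j))^2 + (snd ((\<lambda>k j. (k + 2*j, j::int)) k j))^2)
      = (5*j - (-2)*k)^2 + k^2" by (simp add: power2_eq_square algebra_simps)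
  from line_abs[OF _ par inj id R] show ?thesis by simp
qed



lemma S_est:
  fixes R :: nat assumes R: "R \<ge> 1"
  shows "\<bar>(\<Sum>x\<in>disc_points (real R). orbit_length x) - 8/3 * (sqrt 2 + 2 * sqrt 5) * real R ^ 3\<bar>
          \<le> 192 * real R ^ 2"
proof -
  let ?P = "disc_points (real R)"
  have ol: "orbit_length x = 2 * (\<bar>real_of_int (2 * fst x - snd x)\<bar> + \<bar>real_of_int (fst x + snd x)\<bar>
      + \<bar>real_of_int (fst x - 2 * snd x)\<bar>)" for x
    by (cases x) (simp only: orbit_length_eq fst_conv snd_conv)
  have "(\<Sum>x\<in>?P. orbit_length x) = 2 * ((\<Sum>x\<in>?P. \<bar>real_of_int (2 * fst x - snd x)\<bar>)
      + (\<Sum>x\<in>?P. \<bar>real_of_int (fst x + snd x)\<bar>) + (\<Sum>x\<in>?P. \<bar>real_of_int (fst x - 2 * snd x)\<bar>))"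
    unfolding ol by (simp add: sum.distrib sum_distrib_left)
  then show ?thesis using S1_est[OF R] S2_est[OF R] S3_est[OF R]
    by (simp add: abs_le_iff algebra_simps)
qed

theorem theorem1p2:
  shows "\<exists>C. \<forall>R::nat. R \<ge> 1 \<longrightarrow>
     \<bar>(\<Sum>x\<in>disc_points (real R). orbit_length x) / real (card (disc_points (real R)))
       - 8 / (3 * pi) * (sqrt 2 + 2 * sqrt 5) * real R\<bar> \<le> C"
proof (intro exI allI impI)
  define K where "K = 8/3 * (sqrt 2 + 2 * sqrt 5)"
  fix R :: nat assume R: "R \<ge> 1"
  define S where "S = (\<Sum>x\<in>disc_points (real R). orbit_length x)"
  define N where "N = real (card (disc_points (real R)))"
  define r where "r = real R"
  have r1: "r \<ge> 1" using R by (simp add: r_def)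
  have K0: "K \<ge> 0" by (simp add: K_def)
  have hS: "\<bar>S - K * r^3\<bar> \<le> 192 * r^2" using S_est[OF R] by (simp add: S_def K_def r_def)
  have hN: "\<bar>N - pi * r^2\<bar> \<le> 17 * r" using count_est[OF R] by (simp add: N_def r_def)
  have hL: "N \<ge> r^2" using card_lower[OF R] by (simp add: N_def r_def)
  have r2: "r^2 > 0" using r1 by simp
  have Npos: "N > 0" using hL r2 by linarith
  have eq: "S / N - 8 / (3 * pi) * (sqrt 2 + 2 * sqrt 5) * r
      = (pi * (S - K * r^3) - K * r * (N - pi * r^2)) / (pi * N)"
    using Npos pi_gt_zero unfolding K_def by (simp add: field_simps power2_eq_square power3_eq_cube)
  have num: "\<bar>pi * (S - K * r^3) - K * r * (N - pi * r^2)\<bar> \<le> pi * (192 * r^2) + K * (17 * r^2)"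
  proof -
    have "\<bar>pi * (S - K * r^3) - K * r * (N - pi * r^2)\<bar>
        \<le> \<bar>pi * (S - K * r^3)\<bar> + \<bar>K * r * (N - pi * r^2)\<bar>" by (rule abs_triangle_ineq4)
    also have "\<bar>pi * (S - K * r^3)\<bar> \<le> pi * (192 * r^2)"
      using hS pi_gt_zero by (simp add: abs_mult)
    also have "\<bar>K * r * (N - pi * r^2)\<bar> = K * (r * \<bar>N - pi * r^2\<bar>)"
      using K0 r1 by (simp add: abs_mult)
    also have "r * \<bar>N - pi * r^2\<bar> \<le> r * (17 * r)" using hN r1 by (intro mult_left_mono) auto
    finally show ?thesis using K0 by (simp add: power2_eq_square mult_left_mono)
  qed
  have "\<bar>S / N - 8 / (3 * pi) * (sqrt 2 + 2 * sqrt 5) * r\<bar>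
      = \<bar>pi * (S - K * r^3) - K * r * (N - pi * r^2)\<bar> / (pi * N)"
    unfolding eq using Npos pi_gt_zero by (simp add: abs_divide)
  also have "\<dots> \<le> (pi * (192 * r^2) + K * (17 * r^2)) / (pi * r^2)"
    using num hL Npos pi_gt_zero r2
    by (intro frac_le) (auto intro: mult_left_mono)
  also have "\<dots> = 192 + 17 * K / pi" using r2 pi_gt_zero by (simp add: field_simps)
  finally have X: "\<bar>S / N - 8 / (3 * pi) * (sqrt 2 + 2 * sqrt 5) * r\<bar> \<le> 192 + 17 * K / pi" .
  show "\<bar>(\<Sum>x\<in>disc_points (real R). orbit_length x) / real (card (disc_points (real R)))
       - 8 / (3 * pi) * (sqrt 2 + 2 * sqrt 5) * real R\<bar> \<le> 192 + 17 * (8/3 * (sqrt 2 + 2 * sqrt 5)) / pi"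
    using X unfolding S_def N_def r_def K_def .
qed

end
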